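(* Let $d\ge 1$, let $\epsilon>0$ and let $\eta$ be a positive integer. Let $S_{\text{prototype}}$ and $S_{\text{inc}}$ be disjoint finite subsets of $\mathbb{R}^d$, and put $Q' = S_{\text{prototype}}\cup S_{\text{inc}}$. Let $c_1$ be a cluster of $S_{\text{prototype}}$ (in the sense defined in the context, computed within $S_{\text{prototype}}$), and let $u\in c_1$. Let $v\in S_{\text{inc}}$ be such that $u$ and $v$ are both core points of $Q'$ and $\mathrm{dist}(u,v)\le\epsilon$ (so $u$ and $v$ are directly density-reachable from each other in $Q'$). Then: (i) for every $w\in c_1$ there is a path in $G(Q')$ from $w$ to $v$ consisting only of active edges of $G(Q')$; and (ii) for every $z\in S_{\text{inc}}$ that is density-reachable from $v$ in $Q'$, or from which $v$ is density-reachable in $Q'$, the point $z$ is density-connected to $u$ in $Q'$ and $z$ belongs to the same cluster of $Q'$ as $u$ (and hence as every point of $c_1$).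
   Context: Distances are Euclidean. For a finite set $Q\subset\mathbb{R}^d$ and $x\in Q$, the $\epsilon$-neighborhood of $x$ in $Q$ is $N_\epsilon^Q(x)=\{y\in Q:\mathrm{dist}(x,y)\le\epsilon\}$. The point $x$ is a core point of $Q$ if $|N_\epsilon^Q(x)|\ge\eta$. A point $p$ is directly density-reachable from $q$ in $Q$ if $p\in N_\epsilon^Q(q)$ and $q$ is a core point of $Q$. A point $p$ is density-reachable from $q$ in $Q$ if there is a sequence $p_1=p,\dots,p_m=q$ in $Q$ such that consecutive points are linked by direct density-reachability (each link going out from a core point). The graph $G(Q)$ has vertex set $Q$ and an edge $\{x,y\}$ for distinct $x,y\in Q$ with $\mathrm{dist}(x,y)\le\epsilon$; an edge is called active if at least one of its endpoints is a core point of $Q$ (edges with both endpoints core are "volatile-yes", with exactly one core endpoint "volatile-weak"). A cluster of $Q$ is a maximal set of vertices of $G(Q)$ that are pairwise connected by paths of active edges (i.e. a connected component, containing a core point, of the subgraph of active edges); two points are density-connected when they lie in such a common connected set. The same threshold $\eta$ and radius $\epsilon$ are used for $S_{\text{prototype}}$ and for $Q'$. *)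

theory Defs
  imports "HOL-Analysis.Analysis"
begin

definition nbhd :: "real \<Rightarrow> 'a::euclidean_space set \<Rightarrow> 'a \<Rightarrow> 'a set" where
  "nbhd eps Q x = {y \<in> Q. dist x y \<le> eps}"

definition core_point :: "real \<Rightarrow> nat \<Rightarrow> 'a::euclidean_space set \<Rightarrow> 'a \<Rightarrow> bool" where
  "core_point eps eta Q x \<longleftrightarrow> x \<in> Q \<and> card (nbhd eps Q x) \<ge> eta"

definition dir_reach :: "real \<Rightarrow> nat \<Rightarrow> 'a::euclidean_space set \<Rightarrow> 'a \<Rightarrow> 'a \<Rightarrow> bool" where
  "dir_reach eps eta Q p q \<longleftrightarrow> p \<in> nbhd eps Q q \<and> core_point eps eta Q q"

definition dens_reach :: "real \<Rightarrow> nat \<Rightarrow> 'a::euclidean_space set \<Rightarrow> 'a \<Rightarrow> 'a \<Rightarrow> bool" where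
  "dens_reach eps eta Q p q \<longleftrightarrow> p \<in> Q \<and> q \<in> Q \<and> (dir_reach eps eta Q)\<^sup>*\<^sup>* p q"

definition graph_edge :: "real \<Rightarrow> 'a::euclidean_space set \<Rightarrow> 'a \<Rightarrow> 'a \<Rightarrow> bool" where
  "graph_edge eps Q x y \<longleftrightarrow> x \<in> Q \<and> y \<in> Q \<and> x \<noteq> y \<and> dist x y \<le> eps"

definition active_edge :: "real \<Rightarrow> nat \<Rightarrow> 'a::euclidean_space set \<Rightarrow> 'a \<Rightarrow> 'a \<Rightarrow> bool" where
  "active_edge eps eta Q x y \<longleftrightarrow> graph_edge eps Q x y \<and> (core_point eps eta Q x \<or> core_point eps eta Q y)"

definition active_path :: "real \<Rightarrow> nat \<Rightarrow> 'a::euclidean_space set \<Rightarrow> 'a \<Rightarrow> 'a \<Rightarrow> bool" where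
  "active_path eps eta Q x y \<longleftrightarrow> x \<in> Q \<and> y \<in> Q \<and> (active_edge eps eta Q)\<^sup>*\<^sup>* x y"

definition is_cluster :: "real \<Rightarrow> nat \<Rightarrow> 'a::euclidean_space set \<Rightarrow> 'a set \<Rightarrow> bool" where
  "is_cluster eps eta Q C \<longleftrightarrow>
     C \<subseteq> Q \<and> (\<exists>x\<in>C. core_point eps eta Q x) \<and>
     (\<forall>x\<in>C. \<forall>y\<in>C. active_path eps eta Q x y) \<and>
     (\<forall>x\<in>C. \<forall>y\<in>Q. active_path eps eta Q x y \<longrightarrow> y \<in> C)"

definition dens_connected :: "real \<Rightarrow> nat \<Rightarrow> 'a::euclidean_space set \<Rightarrow> 'a \<Rightarrow> 'a \<Rightarrow> bool" where
  "dens_connected eps eta Q x y \<longleftrightarrow> (\<exists>C. is_cluster eps eta Q C \<and> x \<in> C \<and> y \<in> C)"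

end

theory Submission
  imports Defs
begin

lemma ae_sym: "active_edge eps eta Q x y \<Longrightarrow> active_edge eps eta Q y x"
  unfolding active_edge_def graph_edge_def by (auto simp: dist_commute)

lemma ae_rt_sym: "(active_edge eps eta Q)\<^sup>*\<^sup>* x y \<Longrightarrow> (active_edge eps eta Q)\<^sup>*\<^sup>* y x"
proof (induction rule: rtranclp_induct)
  case base then show ?case by simp
next
  case (step y z)
  then show ?case using ae_sym converse_rtranclp_into_rtranclp by metis
qed

lemma dr_ae: "dir_reach eps eta Q p q \<Longrightarrow> (active_edge eps eta Q)\<^sup>*\<^sup>* p q"
proof -
  assume a: "dir_reach eps eta Q p q"
  show ?thesis
  proof (cases "p = q")
    case True then show ?thesis by simp
  next
    case False
    have "active_edge eps eta Q p q"
      using a False unfolding dir_reach_def nbhd_def core_point_def active_edge_def graph_edge_def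
      by (auto simp: dist_commute)
    then show ?thesis by blast
  qed
qed

lemma drt_ae: "(dir_reach eps eta Q)\<^sup>*\<^sup>* p q \<Longrightarrow> (active_edge eps eta Q)\<^sup>*\<^sup>* p q"
proof (induction rule: rtranclp_induct)
  case base then show ?case by simp
next
  case (step y z)
  then show ?case using dr_ae rtranclp_trans by metis
qed

lemma core_mono:
  assumes "core_point eps eta S x" "S \<subseteq> T" "finite T"
  shows "core_point eps eta T x"
proof -
  have "nbhd eps S x \<subseteq> nbhd eps T x" using assms(2) unfolding nbhd_def by auto
  moreover have "finite (nbhd eps T x)" using assms(3) unfolding nbhd_def by auto
  ultimately have "card (nbhd eps S x) \<le> card (nbhd eps T x)" by (rule card_mono[rotated])
  then show ?thesis using assms unfolding core_point_def by auto
qed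

lemma ae_mono:
  assumes "active_edge eps eta S x y" "S \<subseteq> T" "finite T"
  shows "active_edge eps eta T x y"
  using assms core_mono[OF _ assms(2,3)] unfolding active_edge_def graph_edge_def by blast

lemma aet_mono:
  assumes "(active_edge eps eta S)\<^sup>*\<^sup>* x y" "S \<subseteq> T" "finite T"
  shows "(active_edge eps eta T)\<^sup>*\<^sup>* x y"
  using assms(1)
proof (induction rule: rtranclp_induct)
  case base then show ?case by simp
next
  case (step y z)
  then show ?case using ae_mono[OF _ assms(2,3)] rtranclp.rtrancl_into_rtrancl by metis
qed

theorem lemma4p2:
  fixes eps :: real and eta :: nat
    and S_proto S_inc c1 :: "'a::euclidean_space set" and u v :: 'a
  assumes "eps > 0" and "eta > 0"
    and "finite S_proto" and "finite S_inc" and "S_proto \<inter> S_inc = {}"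
    and "is_cluster eps eta S_proto c1" and "u \<in> c1"
    and "v \<in> S_inc"
    and "core_point eps eta (S_proto \<union> S_inc) u"
    and "core_point eps eta (S_proto \<union> S_inc) v"
    and "dist u v \<le> eps"
  shows "(\<forall>w\<in>c1. active_path eps eta (S_proto \<union> S_inc) w v) \<and>
         (\<forall>z\<in>S_inc. dens_reach eps eta (S_proto \<union> S_inc) z v \<or>
                     dens_reach eps eta (S_proto \<union> S_inc) v z \<longrightarrow>
            dens_connected eps eta (S_proto \<union> S_inc) z u \<and>
            (\<exists>C. is_cluster eps eta (S_proto \<union> S_inc) C \<and> u \<in> C \<and> z \<in> C \<and> c1 \<subseteq> C))"
proof -
  let ?Q = "S_proto \<union> S_inc"
  let ?R = "active_edge eps eta ?Q"
  have fin: "finite ?Q" using assms(3,4) by simp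
  have c1sub: "c1 \<subseteq> S_proto" using assms(6) unfolding is_cluster_def by blast
  have uP: "u \<in> S_proto" using c1sub assms(7) by blast
  have uv: "u \<noteq> v" using uP assms(8) assms(5) by blast
  have euv: "?R u v" unfolding active_edge_def graph_edge_def
    using uP assms(8,9,11) uv by blast
  have wu: "?R\<^sup>*\<^sup>* w u" if "w \<in> c1" for w
  proof -
    have "active_path eps eta S_proto w u" using assms(6,7) that unfolding is_cluster_def by blast
    then have "(active_edge eps eta S_proto)\<^sup>*\<^sup>* w u" unfolding active_path_def by blast
    then show ?thesis using aet_mono[OF _ _ fin] by blast
  qed
  have wv: "?R\<^sup>*\<^sup>* w v" if "w \<in> c1" for w
    using wu[OF that] euv by (meson rtranclp.rtrancl_into_rtrancl)
  have part1: "\<forall>w\<in>c1. active_path eps eta ?Q w v"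
    using wv c1sub assms(8) unfolding active_path_def by blast
  define C where "C = {y \<in> ?Q. ?R\<^sup>*\<^sup>* u y}"
  have uC: "u \<in> C" unfolding C_def using uP by simp
  have clC: "is_cluster eps eta ?Q C"
    unfolding is_cluster_def
  proof (intro conjI ballI impI)
    show "C \<subseteq> ?Q" unfolding C_def by blast
    show "\<exists>x\<in>C. core_point eps eta ?Q x" using uC assms(9) by blast
  next
    fix x y assume "x \<in> C" "y \<in> C"
    then have a: "x \<in> ?Q" "y \<in> ?Q" "?R\<^sup>*\<^sup>* u x" "?R\<^sup>*\<^sup>* u y" unfolding C_def by auto
    have "?R\<^sup>*\<^sup>* x u" using ae_rt_sym[OF a(3)] .
    then have "?R\<^sup>*\<^sup>* x y" using a(4) by (rule rtranclp_trans)
    then show "active_path eps eta ?Q x y" unfolding active_path_def using a by blast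
  next
    fix x y assume "x \<in> C" "y \<in> ?Q" "active_path eps eta ?Q x y"
    then have a: "?R\<^sup>*\<^sup>* u x" "?R\<^sup>*\<^sup>* x y" unfolding C_def active_path_def by auto
    have "?R\<^sup>*\<^sup>* u y" using a(1,2) by (rule rtranclp_trans)
    then show "y \<in> C" unfolding C_def using \<open>y \<in> ?Q\<close> by blast
  qed
  have c1C: "c1 \<subseteq> C" unfolding C_def using wu ae_rt_sym c1sub by blast
  have part2: "?R\<^sup>*\<^sup>* u z" if "z \<in> S_inc" "dens_reach eps eta ?Q z v \<or> dens_reach eps eta ?Q v z" for z
  proof -
    have "?R\<^sup>*\<^sup>* v z" using that(2) unfolding dens_reach_def
    proof
      assume "z \<in> ?Q \<and> v \<in> ?Q \<and> (dir_reach eps eta ?Q)\<^sup>*\<^sup>* z v"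
      then show ?thesis using drt_ae ae_rt_sym by blast
    next
      assume "v \<in> ?Q \<and> z \<in> ?Q \<and> (dir_reach eps eta ?Q)\<^sup>*\<^sup>* v z"
      then show ?thesis using drt_ae by blast
    qed
    then show ?thesis using euv by (meson converse_rtranclp_into_rtranclp)
  qed
  show ?thesis
  proof (intro conjI part1 ballI impI)
    fix z assume z: "z \<in> S_inc" "dens_reach eps eta ?Q z v \<or> dens_reach eps eta ?Q v z"
    then have zC: "z \<in> C" unfolding C_def using part2 by blast
    show "dens_connected eps eta ?Q z u" unfolding dens_connected_def using clC zC uC by blast
    show "\<exists>C. is_cluster eps eta ?Q C \<and> u \<in> C \<and> z \<in> C \<and> c1 \<subseteq> C"
      using clC zC uC c1C by blast
  qed
qed

end
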